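(* Let $f:\mathbb{R}^n\to\mathbb{R}$ be subdifferentiable with subgradient Lipschitz continuous with constant $L>0$ (i.e. $\|g_x-g_y\|\le L\|x-y\|$ for all $x,y$, $g_x\in\partial f(x)$, $g_y\in\partial f(y)$). Let $M\ge 0$ be an integer, $0<\gamma<1$, and $(\eta_k)_{k\ge0}$ a sequence of positive numbers with $\sum_k\eta_k<\infty$. Consider iterates $x_{k+1}=x_k+\alpha_k d_k$, where at step $k$ we are given $g_k\in\partial f(x_k)$ and a nonzero search direction $d_k\in\mathbb{R}^n$, and $\alpha_k=(1/2)^{h_k}$ where $h_k$ is the smallest integer in $\{0,1,2,\dots\}$ such that $$f(x_k+\alpha_k d_k)\le \max_{0\le j\le \min\{k,M\}} f(x_{k-j})+\gamma\alpha_k g_k^Td_k+\eta_k .$$ Then for each $k$, either $\alpha_k=1$ or $$\alpha_k\ge \frac{\gamma-1}{L}\,\frac{g_k^Td_k}{\|d_k\|^2}.$$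
   Context: A subgradient of $f$ at $x$ is any $g\in\mathbb{R}^n$ with $f(y)\ge f(x)+g^T(y-x)$ for all $y$; $\partial f(x)$ is the set of subgradients at $x$, and $f$ is subdifferentiable if $\partial f(x)\neq\emptyset$ everywhere. *)

theory Defs
  imports "HOL-Analysis.Analysis"
begin

definition subdifferential :: "(real^'n \<Rightarrow> real) \<Rightarrow> real^'n \<Rightarrow> (real^'n) set" where
  "subdifferential f x = {g. \<forall>y. f y \<ge> f x + g \<bullet> (y - x)}"

definition subdifferentiable :: "(real^'n \<Rightarrow> real) \<Rightarrow> bool" where
  "subdifferentiable f \<longleftrightarrow> (\<forall>x. subdifferential f x \<noteq> {})"

end

theory Submission
  imports Defs
begin

lemma desc_partial:
  fixes f :: "real^'n \<Rightarrow> real" and x g d :: "real^'n" and L t :: real and N :: nat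
  assumes subdiff: "subdifferentiable f"
    and Lip: "\<And>x y gx gy. gx \<in> subdifferential f x \<Longrightarrow> gy \<in> subdifferential f y \<Longrightarrow>
               norm (gx - gy) \<le> L * norm (x - y)"
    and g: "g \<in> subdifferential f x" and t: "t \<ge> 0" and N: "N \<ge> 1"
  shows "m \<le> N \<Longrightarrow> f (x + (real m * t / N) *\<^sub>R d) \<le> f x + (real m * t / N) * (g \<bullet> d)
           + L * (norm d)^2 * (t / N)^2 * (real m * (real m + 1) / 2)"
proof (induction m)
  case 0
  then show ?case by simp
next
  case (Suc m)
  define s where "s = t / N"
  have s0: "s \<ge> 0" using t N unfolding s_def by simp
  define y where "y = x + (real m * t / N) *\<^sub>R d"
  define y' where "y' = x + (real (Suc m) * t / N) *\<^sub>R d"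
  obtain G where G: "G \<in> subdifferential f y'" using subdiff unfolding subdifferentiable_def by blast
  have yy0: "y' - y = (real (Suc m) * t / N - real m * t / N) *\<^sub>R d"
    unfolding y_def y'_def by (simp add: scaleR_diff_left)
  have "real (Suc m) * t / N - real m * t / N = s"
    unfolding s_def by (simp add: diff_divide_distrib[symmetric] algebra_simps)
  hence yy: "y' - y = s *\<^sub>R d" using yy0 by simp
  have fy: "f y \<ge> f y' + G \<bullet> (y - y')" using G unfolding subdifferential_def by blast
  have "G \<bullet> (y - y') = - (s * (G \<bullet> d))" using yy
    by (metis minus_diff_eq inner_minus_right inner_scaleR_right)
  hence 1: "f y' \<le> f y + s * (G \<bullet> d)" using fy by linarith
  have "norm (G - g) \<le> L * norm (y' - x)" using Lip[OF G g] .
  also have "norm (y' - x) = (real (Suc m) * s) * norm d" unfolding y'_def s_def using t N by simp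
  finally have ng: "norm (G - g) \<le> L * ((real (Suc m) * s) * norm d)" .
  have "G \<bullet> d = g \<bullet> d + (G - g) \<bullet> d" by (simp add: inner_diff_left)
  also have "(G - g) \<bullet> d \<le> norm (G - g) * norm d" by (rule norm_cauchy_schwarz)
  also have "norm (G - g) * norm d \<le> L * ((real (Suc m) * s) * norm d) * norm d"
    using ng by (simp add: mult_right_mono)
  finally have 2: "G \<bullet> d \<le> g \<bullet> d + L * (real (Suc m) * s) * (norm d)^2"
    by (simp add: power2_eq_square mult.assoc)
  have IH: "f y \<le> f x + (real m * s) * (g \<bullet> d) + L * (norm d)^2 * s^2 * (real m * (real m + 1) / 2)"
    using Suc unfolding y_def s_def by simp
  have "f y' \<le> f x + (real m * s) * (g \<bullet> d) + L * (norm d)^2 * s^2 * (real m * (real m + 1) / 2)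
      + s * (g \<bullet> d + L * (real (Suc m) * s) * (norm d)^2)"
    using 1 IH mult_left_mono[OF 2 s0] by linarith
  also have "\<dots> = f x + (real (Suc m) * s) * (g \<bullet> d) + L * (norm d)^2 * s^2 * (real (Suc m) * (real (Suc m) + 1) / 2)"
    by (simp add: algebra_simps power2_eq_square add_divide_distrib)
  finally show ?case unfolding y'_def s_def by simp
qed

lemma descent:
  fixes f :: "real^'n \<Rightarrow> real" and x g d :: "real^'n" and L t :: real
  assumes subdiff: "subdifferentiable f" and Lpos: "L > 0"
    and Lip: "\<And>x y gx gy. gx \<in> subdifferential f x \<Longrightarrow> gy \<in> subdifferential f y \<Longrightarrow>
               norm (gx - gy) \<le> L * norm (x - y)"
    and g: "g \<in> subdifferential f x" and t: "t \<ge> 0"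
  shows "f (x + t *\<^sub>R d) \<le> f x + t * (g \<bullet> d) + L * (norm d)^2 * t^2 / 2"
proof (rule ccontr)
  define C where "C = L * (norm d)^2 * t^2"
  have C0: "C \<ge> 0" unfolding C_def using Lpos by simp
  assume "\<not> ?thesis"
  then have e: "f (x + t *\<^sub>R d) - (f x + t * (g \<bullet> d) + C / 2) > 0" unfolding C_def by simp
  define e where "e = f (x + t *\<^sub>R d) - (f x + t * (g \<bullet> d) + C / 2)"
  have e0: "e > 0" using e unfolding e_def .
  obtain N :: nat where NN: "C / (2 * e) < real N" using reals_Archimedean2 by blast
  have "C / (2*e) \<ge> 0" using C0 e0 by simp
  hence N1: "N \<ge> 1" using NN by linarith
  have "f (x + (real N * t / N) *\<^sub>R d) \<le> f x + (real N * t / N) * (g \<bullet> d)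
           + L * (norm d)^2 * (t / N)^2 * (real N * (real N + 1) / 2)"
    using desc_partial[OF subdiff Lip g t N1, of N d] by simp
  moreover have e2: "real N * t / N = t" using N1 by simp
  moreover have e3: "L * (norm d)^2 * (t / N)^2 * (real N * (real N + 1) / 2) = C / 2 + C / (2 * N)"
    unfolding C_def using N1 by (simp add: field_simps power2_eq_square)
  ultimately have A: "f (x + t *\<^sub>R d) \<le> f x + t * (g \<bullet> d) + C / 2 + C / (2 * N)"
    unfolding e2 e3 by (simp only: add.assoc)
  have "C < 2 * e * N" using NN e0 by (simp add: field_simps)
  hence "C / (2 * N) < e" using N1 by (simp add: field_simps)
  thus False using A unfolding e_def by linarith
qed

theorem lemma3:
  fixes f :: "real^'n \<Rightarrow> real" and L \<gamma> :: real and M :: nat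
    and \<eta> :: "nat \<Rightarrow> real"
    and x g d :: "nat \<Rightarrow> real^'n" and \<alpha> :: "nat \<Rightarrow> real" and h :: "nat \<Rightarrow> nat"
  assumes subdiff: "subdifferentiable f"
    and Lpos: "L > 0"
    and Lip: "\<And>x y gx gy. gx \<in> subdifferential f x \<Longrightarrow> gy \<in> subdifferential f y \<Longrightarrow>
               norm (gx - gy) \<le> L * norm (x - y)"
    and gamma: "0 < \<gamma>" "\<gamma> < 1"
    and eta_pos: "\<And>k. \<eta> k > 0"
    and eta_sum: "summable \<eta>"
    and g_sub: "\<And>k. g k \<in> subdifferential f (x k)"
    and d_nz: "\<And>k. d k \<noteq> 0"
    and iter: "\<And>k. x (Suc k) = x k + \<alpha> k *\<^sub>R d k"
    and alpha_def: "\<And>k. \<alpha> k = (1/2) ^ h k"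
    and h_ok: "\<And>k. f (x k + (1/2) ^ h k *\<^sub>R d k)
                 \<le> Max ((\<lambda>j. f (x (k - j))) ` {0..min k M})
                    + \<gamma> * (1/2) ^ h k * (g k \<bullet> d k) + \<eta> k"
    and h_least: "\<And>k i. i < h k \<Longrightarrow> \<not> (f (x k + (1/2) ^ i *\<^sub>R d k)
                 \<le> Max ((\<lambda>j. f (x (k - j))) ` {0..min k M})
                    + \<gamma> * (1/2) ^ i * (g k \<bullet> d k) + \<eta> k)"
  shows "\<forall>k. \<alpha> k = 1 \<or> \<alpha> k \<ge> (\<gamma> - 1) / L * ((g k \<bullet> d k) / (norm (d k))^2)"
proof
  fix k
  show "\<alpha> k = 1 \<or> \<alpha> k \<ge> (\<gamma> - 1) / L * ((g k \<bullet> d k) / (norm (d k))^2)"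
  proof (cases "h k = 0")
    case True
    then show ?thesis using alpha_def by simp
  next
    case False
    define i where "i = h k - 1"
    have hi: "h k = Suc i" using False unfolding i_def by simp
    define b :: real where "b = (1/2) ^ i"
    have b0: "b > 0" unfolding b_def by simp
    have ab: "\<alpha> k = b / 2" unfolding b_def using alpha_def hi by simp
    define Mx where "Mx = Max ((\<lambda>j. f (x (k - j))) ` {0..min k M})"
    have "f (x k) \<le> Mx" unfolding Mx_def
      by (rule Max_ge) (auto intro!: image_eqI[where x=0])
    moreover have "\<not> (f (x k + b *\<^sub>R d k) \<le> Mx + \<gamma> * b * (g k \<bullet> d k) + \<eta> k)"
      using h_least[of i k] hi unfolding Mx_def b_def by simp
    moreover have "f (x k + b *\<^sub>R d k) \<le> f (x k) + b * (g k \<bullet> d k) + L * (norm (d k))^2 * b^2 / 2"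
      using descent[OF subdiff Lpos Lip g_sub[of k]] b0 by simp
    ultimately have "\<gamma> * b * (g k \<bullet> d k) < b * (g k \<bullet> d k) + L * (norm (d k))^2 * b^2 / 2"
      using eta_pos[of k] by linarith
    hence "b * ((\<gamma> - 1) * (g k \<bullet> d k)) < b * (L * (norm (d k))^2 * (b / 2))"
      by (simp add: algebra_simps power2_eq_square)
    hence "(\<gamma> - 1) * (g k \<bullet> d k) < L * (norm (d k))^2 * (b / 2)"
      using b0 by (simp add: mult_less_cancel_left_pos)
    hence "(\<gamma> - 1) * (g k \<bullet> d k) < L * (norm (d k))^2 * \<alpha> k"
    proof -
      have "L * (norm (d k))^2 * (b / 2) = L * (norm (d k))^2 * \<alpha> k" using ab by simp
      thus ?thesis using \<open>(\<gamma> - 1) * (g k \<bullet> d k) < L * (norm (d k))^2 * (b / 2)\<close> by linarith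
    qed
    moreover have "L * (norm (d k))^2 > 0" using Lpos d_nz[of k] by simp
    ultimately have "(\<gamma> - 1) * (g k \<bullet> d k) / (L * (norm (d k))^2) < \<alpha> k"
      by (simp only: pos_divide_less_eq mult.commute)
    thus ?thesis unfolding times_divide_times_eq by linarith
  qed
qed

end
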